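(* Let $q\in\mathbb{C}^{\ast}$ not a root of unity, $R=\mathbb{C}[[z]]$, $F=\mathbb{C}((z))$. Let $V$ be an object of ${\cal B}^{al}_q$, let $L\subset V$ be a $\xi$-invariant $R$-lattice (not necessarily $\xi^{-1}$-invariant), let $\overline L=L/zL$ with the $\mathbb{C}$-linear operator induced by $\xi$, and let $\overline P\subset\overline L$ be a $\xi$-invariant subspace such that for every eigenvalue $\alpha$ of $\xi$ on $\overline P$ and every integer $n\neq0$, the number $q^n\alpha$ is not an eigenvalue of $\xi$ on $\overline L$. Then the embedding $\overline P\hookrightarrow\overline L$ has a $\mathbb{C}[\xi]$-equivariant lifting $\overline P\to L$, i.e. a $\mathbb{C}$-linear map commuting with $\xi$ whose composition with $L\to L/zL$ is the inclusion.
   Context: ${\cal B}^{al}_q$ is the category of finite-dimensional $F$-vector spaces $V$ equipped with a semi-linear automorphism $\xi$, $\xi(f(z)v)=f(qz)\xi(v)$. An $R$-lattice in $V$ is a finitely generated $R$-submodule spanning $V$ over $F$. Since $\xi(zL)=qz\xi(L)\subset zL$, $\xi$ induces a $\mathbb{C}$-linear operator on $L/zL$. *)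

theory Defs
  imports "HOL-Computational_Algebra.Formal_Laurent_Series"
begin

text \<open>F = C((z)) is the type complex fls; R = C[[z]] is embedded as fps_to_fls ` UNIV.\<close>

text \<open>The substitution f(z) |-> f(q z) on Laurent series: coefficient n is multiplied by q^n.\<close>
lift_definition fls_qsubst :: "complex \<Rightarrow> complex fls \<Rightarrow> complex fls"
  is "\<lambda>q f n. q powi n * f n"
  by (auto elim!: eventually_mono)

definition qdiff_module ::
  "complex \<Rightarrow> (complex fls \<Rightarrow> 'v::ab_group_add \<Rightarrow> 'v) \<Rightarrow> ('v \<Rightarrow> 'v) \<Rightarrow> bool" where
  "qdiff_module q scale xi \<longleftrightarrow>
     Vector_Spaces.vector_space scale \<and>
     (\<exists>B. finite B \<and> module.span scale B = UNIV) \<and>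
     bij xi \<and>
     (\<forall>x y. xi (x + y) = xi x + xi y) \<and>
     (\<forall>f v. xi (scale f v) = scale (fls_qsubst q f) (xi v))"

definition R_lattice :: "(complex fls \<Rightarrow> 'v::ab_group_add \<Rightarrow> 'v) \<Rightarrow> 'v set \<Rightarrow> bool" where
  "R_lattice scale L \<longleftrightarrow>
     (\<exists>G. finite G \<and> G \<subseteq> L \<and>
        L = {v. \<exists>r. v = (\<Sum>g\<in>G. scale (fps_to_fls (r g)) g)}) \<and>
     module.span scale L = UNIV"

abbreviation cscale :: "(complex fls \<Rightarrow> 'v \<Rightarrow> 'v) \<Rightarrow> complex \<Rightarrow> 'v \<Rightarrow> 'v" where
  "cscale scale c v \<equiv> scale (fls_const c) v"

abbreviation zmul :: "(complex fls \<Rightarrow> 'v \<Rightarrow> 'v) \<Rightarrow> 'v set \<Rightarrow> 'v set" where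
  "zmul scale L \<equiv> scale fls_X ` L"

text \<open>alpha is an eigenvalue of the operator induced by xi on P/zL (P a xi-invariant
  subspace of L containing zL, i.e. a subspace of L/zL):
  some x in P with x not in zL and xi x - alpha x in zL.\<close>
definition quot_eigenvalue ::
  "(complex fls \<Rightarrow> 'v::ab_group_add \<Rightarrow> 'v) \<Rightarrow> ('v \<Rightarrow> 'v) \<Rightarrow> 'v set \<Rightarrow> 'v set \<Rightarrow> complex \<Rightarrow> bool" where
  "quot_eigenvalue scale xi L P \<alpha> \<longleftrightarrow>
     (\<exists>x\<in>P. x \<notin> zmul scale L \<and> xi x - cscale scale \<alpha> x \<in> zmul scale L)"

end

theory Submission imports Defs "HOL-Computational_Algebra.Fundamental_Theorem_Algebra"
begin
unbundle fps_syntax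

lemma qsubst_nth: "fls_qsubst q f $$ n = q powi n * f $$ n"
  by (simp add: fls_qsubst.rep_eq)

lemma qsubst_const: "fls_qsubst q (fls_const c) = fls_const c"
  by (rule fls_eqI) (simp add: qsubst_nth)

lemma qsubst_X: "fls_qsubst q fls_X = fls_const q * fls_X"
  by (rule fls_eqI) (simp add: qsubst_nth)

lemma fls_const_add': "fls_const (a + b) = fls_const a + (fls_const b :: complex fls)"
  by (rule fls_eqI) simp

lemma fps_to_fls_sum: "fps_to_fls (sum f A) = (\<Sum>a\<in>A. fps_to_fls (f a))"
  by (induction A rule: infinite_finite_induct) auto

lemma kernel_lemma:
  fixes a :: "'i \<Rightarrow> 'g \<Rightarrow> complex"
  assumes "finite Gs" "finite I" "card Gs < card I"
  shows "\<exists>c. (\<exists>i\<in>I. c i \<noteq> 0) \<and> (\<forall>g\<in>Gs. (\<Sum>i\<in>I. c i * a i g) = 0)"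
  using assms
proof (induction Gs arbitrary: I a rule: finite_induct)
  case empty
  then obtain i0 where "i0 \<in> I" by fastforce
  then show ?case by (intro exI[of _ "\<lambda>i. if i = i0 then 1 else 0"]) auto
next
  case (insert g0 Gs)
  show ?case
  proof (cases "\<forall>i\<in>I. a i g0 = 0")
    case True
    have "card Gs < card I" using insert by simp
    then obtain c where c: "\<exists>i\<in>I. c i \<noteq> 0" "\<forall>g\<in>Gs. (\<Sum>i\<in>I. c i * a i g) = 0"
      using insert.IH[OF insert.prems(1)] by blast
    then show ?thesis using True by (intro exI[of _ c]) auto
  next
    case False
    then obtain j where j: "j \<in> I" "a j g0 \<noteq> 0" by blast
    define I' where "I' = I - {j}"
    define b where "b i g = a i g - a i g0 / a j g0 * a j g" for i g
    have "card Gs < card I'" using insert j by (simp add: I'_def)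
    then obtain d where d: "\<exists>i\<in>I'. d i \<noteq> 0" "\<forall>g\<in>Gs. (\<Sum>i\<in>I'. d i * b i g) = 0"
      using insert.IH[of I' b] insert.prems by (auto simp: I'_def)
    define S where "S = (\<Sum>i\<in>I'. d i * a i g0)"
    define c where "c = d(j := - S / a j g0)"
    have jI': "j \<notin> I'" by (simp add: I'_def)
    have sumc: "(\<Sum>i\<in>I. c i * a i g) = c j * a j g + (\<Sum>i\<in>I'. d i * a i g)" for g
    proof -
      have "(\<Sum>i\<in>I. c i * a i g) = c j * a j g + (\<Sum>i\<in>I'. c i * a i g)"
        unfolding I'_def using j insert.prems by (simp add: sum.remove)
      also have "(\<Sum>i\<in>I'. c i * a i g) = (\<Sum>i\<in>I'. d i * a i g)"
        using jI' by (intro sum.cong) (auto simp: c_def)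
      finally show ?thesis .
    qed
    have "\<forall>g\<in>insert g0 Gs. (\<Sum>i\<in>I. c i * a i g) = 0"
    proof
      fix g assume g: "g \<in> insert g0 Gs"
      show "(\<Sum>i\<in>I. c i * a i g) = 0"
      proof (cases "g = g0")
        case True
        have "(\<Sum>i\<in>I. c i * a i g0) = c j * a j g0 + S" by (simp only: sumc S_def)
        then show ?thesis using j True by (simp add: c_def)
      next
        case False
        then have gG: "g \<in> Gs" using g by auto
        have "(\<Sum>i\<in>I'. d i * a i g) = (\<Sum>i\<in>I'. d i * b i g) + S / a j g0 * a j g"
        proof -
          have "(\<Sum>i\<in>I'. d i * b i g) = (\<Sum>i\<in>I'. d i * a i g) - (\<Sum>i\<in>I'. d i * a i g0 * (a j g / a j g0))"
            by (simp add: b_def algebra_simps sum_subtractf)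
          also have "(\<Sum>i\<in>I'. d i * a i g0 * (a j g / a j g0)) = S / a j g0 * a j g"
            unfolding S_def sum_distrib_right[symmetric] by simp
          finally show ?thesis by simp
        qed
        also have "\<dots> = S / a j g0 * a j g" using d(2) gG by simp
        finally have "(\<Sum>i\<in>I'. d i * a i g) = S / a j g0 * a j g" .
        then show ?thesis using j by (simp only: sumc) (simp add: c_def)
      qed
    qed
    moreover have "\<exists>i\<in>I. c i \<noteq> 0"
      using d(1) jI' by (auto simp: c_def I'_def)
    ultimately show ?thesis by blast
  qed
qed

locale qsetup =
  fixes q :: complex and scale :: "complex fls \<Rightarrow> 'v::ab_group_add \<Rightarrow> 'v"
    and xi :: "'v \<Rightarrow> 'v" and G :: "'v set" and L :: "'v set"
  assumes q_nz: "q \<noteq> 0"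
    and V: "qdiff_module q scale xi"
    and G: "finite G"
    and L_def: "L = {v. \<exists>r. v = (\<Sum>g\<in>G. scale (fps_to_fls (r g)) g)}"
    and L_inv: "xi ` L \<subseteq> L"
begin
unbundle fps_syntax

sublocale vs: Vector_Spaces.vector_space scale
  using V unfolding qdiff_module_def by auto

abbreviation cs where "cs c v \<equiv> scale (fls_const c) v"

lemma xi_add: "xi (x + y) = xi x + xi y"
  using V unfolding qdiff_module_def by auto

lemma xi_scale: "xi (scale f v) = scale (fls_qsubst q f) (xi v)"
  using V unfolding qdiff_module_def by auto

lemma xi_0[simp]: "xi 0 = 0"
  using xi_add[of 0 0] by simp

lemma xi_minus: "xi (- x) = - xi x"
proof -
  have "xi x + xi (- x) = 0" using xi_add[of x "-x"] by simp
  then show ?thesis by (metis minus_unique)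
qed

lemma xi_diff: "xi (x - y) = xi x - xi y"
  using xi_add[of x "-y"] xi_minus[of y] by simp

lemma xi_sum: "xi (sum f A) = sum (\<lambda>a. xi (f a)) A"
  by (induction A rule: infinite_finite_induct) (auto simp: xi_add)

lemma xi_cs: "xi (cs c v) = cs c (xi v)"
  by (simp add: xi_scale qsubst_const)

lemma xi_X: "xi (scale fls_X v) = cs q (scale fls_X (xi v))"
  by (simp add: xi_scale qsubst_X vs.scale_scale)

lemma xi_Xpow: "xi (scale (fls_X ^ k) v) = cs (q ^ k) (scale (fls_X ^ k) (xi v))"
proof (induction k arbitrary: v)
  case 0 then show ?case by simp
next
  case (Suc k)
  have "scale (fls_X ^ Suc k) v = scale fls_X (scale (fls_X ^ k) v)"
    by (simp add: vs.scale_scale)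
  then have "xi (scale (fls_X ^ Suc k) v) = cs q (scale fls_X (cs (q ^ k) (scale (fls_X ^ k) (xi v))))"
    by (simp only: xi_X Suc.IH)
  also have "\<dots> = scale (fls_const q * (fls_X * (fls_const (q ^ k) * fls_X ^ k))) (xi v)"
    by (simp only: vs.scale_scale)
  also have "fls_const q * (fls_X * (fls_const (q ^ k) * fls_X ^ k)) = fls_const (q ^ Suc k) * fls_X ^ Suc k"
    by (simp only: power_Suc fls_const_mult_const[symmetric] mult_ac)
  also have "scale (fls_const (q ^ Suc k) * fls_X ^ Suc k) (xi v) = cs (q ^ Suc k) (scale (fls_X ^ Suc k) (xi v))"
    by (simp only: vs.scale_scale)
  finally show ?case .
qed

definition lc :: "('v \<Rightarrow> complex fps) \<Rightarrow> 'v" where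
  "lc r = (\<Sum>g\<in>G. scale (fps_to_fls (r g)) g)"

lemma L_lc: "L = range lc"
  unfolding L_def lc_def by auto

lemma lc_add: "lc (\<lambda>g. r g + s g) = lc r + lc s"
  unfolding lc_def fps_to_fls_plus vs.scale_left_distrib by (rule sum.distrib)

lemma lc_mult: "lc (\<lambda>g. f * r g) = scale (fps_to_fls f) (lc r)"
  by (simp add: lc_def vs.scale_sum_right vs.scale_scale fls_times_fps_to_fls)

lemma lc_zero: "lc (\<lambda>g. 0) = 0"
  by (simp add: lc_def)

lemma lc_diff: "lc (\<lambda>g. r g - s g) = lc r - lc s"
  unfolding lc_def fps_to_fls_minus vs.scale_left_diff_distrib by (rule sum_subtractf)

lemma lcI: "lc r \<in> L" by (simp add: L_lc)

lemma L_add: "x \<in> L \<Longrightarrow> y \<in> L \<Longrightarrow> x + y \<in> L"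
proof -
  assume "x \<in> L" "y \<in> L"
  then obtain r s where "x = lc r" "y = lc s" by (auto simp: L_lc)
  then have "x + y = lc (\<lambda>g. r g + s g)" by (simp add: lc_add)
  then show ?thesis by (simp add: lcI)
qed

lemma L_diff: "x \<in> L \<Longrightarrow> y \<in> L \<Longrightarrow> x - y \<in> L"
proof -
  assume "x \<in> L" "y \<in> L"
  then obtain r s where "x = lc r" "y = lc s" by (auto simp: L_lc)
  then have "x - y = lc (\<lambda>g. r g - s g)" by (simp add: lc_diff)
  then show ?thesis by (simp add: lcI)
qed

lemma L_0: "0 \<in> L"
  unfolding L_lc using lc_zero by (metis rangeI)

lemma L_fps: "x \<in> L \<Longrightarrow> scale (fps_to_fls f) x \<in> L"
  unfolding L_lc using lc_mult by (metis rangeE rangeI)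

lemma L_cs: "x \<in> L \<Longrightarrow> cs c x \<in> L"
  using L_fps[of x "fps_const c"] by simp

lemma L_Xpow: "x \<in> L \<Longrightarrow> scale (fls_X ^ k) x \<in> L"
  using L_fps[of x "fps_X ^ k"] by (simp add: fps_to_fls_power)

lemma L_sum: "(\<And>a. a \<in> A \<Longrightarrow> f a \<in> L) \<Longrightarrow> sum f A \<in> L"
  by (induction A rule: infinite_finite_induct) (auto simp: L_0 L_add)

lemma L_xi: "x \<in> L \<Longrightarrow> xi x \<in> L"
  using L_inv by auto

definition Z :: "nat \<Rightarrow> 'v set" where
  "Z k = scale (fls_X ^ k) ` L"

lemma Z_1: "zmul scale L = Z 1"
  by (simp add: Z_def)

lemma Z_0: "0 \<in> Z k"
  unfolding Z_def using L_0 by (metis image_eqI vs.scale_zero_right)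

lemma Z_add: "x \<in> Z k \<Longrightarrow> y \<in> Z k \<Longrightarrow> x + y \<in> Z k"
  unfolding Z_def by (auto simp flip: vs.scale_right_distrib intro!: imageI L_add)

lemma Z_diff: "x \<in> Z k \<Longrightarrow> y \<in> Z k \<Longrightarrow> x - y \<in> Z k"
  unfolding Z_def by (auto simp flip: vs.scale_right_diff_distrib intro!: imageI L_diff)

lemma Z_cs: "x \<in> Z k \<Longrightarrow> cs c x \<in> Z k"
proof -
  assume "x \<in> Z k"
  then obtain y where y: "y \<in> L" "x = scale (fls_X ^ k) y" by (auto simp: Z_def)
  have "cs c x = scale (fls_X ^ k) (cs c y)" unfolding y vs.scale_scale by (simp only: mult.commute)
  then show ?thesis unfolding Z_def using y L_cs by blast
qed

lemma Z_L: "Z k \<subseteq> L"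
  unfolding Z_def using L_Xpow by auto

lemma Z_Suc: "x \<in> Z (Suc k) \<Longrightarrow> x \<in> Z k"
proof -
  assume "x \<in> Z (Suc k)"
  then obtain y where y: "y \<in> L" "x = scale (fls_X ^ Suc k) y" by (auto simp: Z_def)
  have "x = scale (fls_X ^ k) (scale fls_X y)" unfolding y vs.scale_scale by (simp only: power_Suc mult.commute)
  moreover have "scale fls_X y \<in> L" using L_Xpow[OF y(1), of 1] by simp
  ultimately show ?thesis unfolding Z_def by blast
qed

lemma Z_mono: "k \<le> m \<Longrightarrow> x \<in> Z m \<Longrightarrow> x \<in> Z k"
  by (induction m rule: dec_induct) (auto intro: Z_Suc)

lemma Z_xi: "x \<in> Z k \<Longrightarrow> xi x \<in> Z k"
proof -
  assume "x \<in> Z k"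
  then obtain y where y: "y \<in> L" "x = scale (fls_X ^ k) y" by (auto simp: Z_def)
  have "xi x = scale (fls_X ^ k) (cs (q ^ k) (xi y))" 
    unfolding y xi_Xpow vs.scale_scale by (simp only: mult.commute)
  then show ?thesis unfolding Z_def using y L_cs L_xi by blast
qed

lemma Z_sum: "(\<And>a. a \<in> A \<Longrightarrow> f a \<in> Z k) \<Longrightarrow> sum f A \<in> Z k"
  by (induction A rule: infinite_finite_induct) (auto simp: Z_0 Z_add)

lemma Z_scale_iff: "scale (fls_X ^ k) x \<in> Z (k + m) \<longleftrightarrow> x \<in> Z m"
proof
  assume "scale (fls_X ^ k) x \<in> Z (k + m)"
  then obtain y where y: "y \<in> L" "scale (fls_X ^ k) x = scale (fls_X ^ (k + m)) y" by (auto simp: Z_def)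
  then have "scale (fls_X ^ k) x = scale (fls_X ^ k) (scale (fls_X ^ m) y)"
    by (simp add: vs.scale_scale power_add)
  then have "x = scale (fls_X ^ m) y"
    using vs.scale_left_imp_eq by (metis fls_X_nonzero power_not_zero)
  then show "x \<in> Z m" using y by (auto simp: Z_def)
next
  assume "x \<in> Z m"
  then obtain y where y: "y \<in> L" "x = scale (fls_X ^ m) y" by (auto simp: Z_def)
  then show "scale (fls_X ^ k) x \<in> Z (k + m)" by (auto simp: Z_def vs.scale_scale power_add)
qed

lemma L_decomp: "x \<in> L \<Longrightarrow> \<exists>c. x - (\<Sum>g\<in>G. cs (c g) g) \<in> Z 1"
proof -
  assume "x \<in> L"
  then obtain r where r: "x = lc r" by (auto simp: L_lc)
  have e: "r g - fps_const (r g $ 0) = fps_X * fps_shift 1 (r g)" for g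
    by (rule fps_ext) (auto simp: fps_X_power_mult_nth[where k=1, simplified])
  have "x - (\<Sum>g\<in>G. cs (r g $ 0) g) = lc (\<lambda>g. r g - fps_const (r g $ 0))"
    by (simp add: r lc_diff) (simp add: lc_def)
  also have "\<dots> = scale (fps_to_fls fps_X) (lc (\<lambda>g. fps_shift 1 (r g)))"
    by (simp only: e lc_mult)
  also have "\<dots> = scale (fls_X ^ 1) (lc (\<lambda>g. fps_shift 1 (r g)))"
    by simp
  finally have "x - (\<Sum>g\<in>G. cs (r g $ 0) g) \<in> Z 1" unfolding Z_def using lcI by blast
  then show ?thesis by (intro exI[of _ "\<lambda>g. r g $ 0"]) simp
qed

lemma fls_X_pow_regpart:
  fixes h :: "complex fls"
  assumes "int N \<ge> - fls_subdegree h"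
  shows "fls_X ^ N * h = fps_to_fls (fls_regpart (fls_X ^ N * h))"
proof (cases "h = 0")
  case True then show ?thesis by simp
next
  case False
  have "fls_subdegree (fls_X ^ N * h) \<ge> 0"
    using False assms by (simp add: fls_X_power_times_conv_shift)
  then show ?thesis by simp
qed

lemma sep: assumes "\<And>k. v \<in> Z k" shows "v = 0"
proof (rule ccontr)
  assume v0: "v \<noteq> 0"
  obtain B where B: "vs.independent B" "UNIV \<subseteq> vs.span B"
    using vs.basis_exists[of UNIV] by blast
  define rep where "rep = vs.representation B"
  have sp: "u \<in> vs.span B" for u using B by auto
  obtain b where b: "rep v b \<noteq> 0"
  proof (rule ccontr)
    assume "\<not> thesis"
    then have "\<forall>b. rep v b = 0" using that by blast
    then have "v = (\<Sum>b | rep v b \<noteq> 0. scale (rep v b) b)"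
      unfolding rep_def using vs.sum_nonzero_representation_eq[OF B(1) sp[of v]] by simp
    also have "\<dots> = 0" using \<open>\<forall>b. rep v b = 0\<close> by simp
    finally show False using v0 by simp
  qed
  define h where "h g = rep g b" for g
  define N where "N = (\<Sum>g\<in>G. nat (- fls_subdegree (h g)))"
  have N: "int N \<ge> - fls_subdegree (h g)" if "g \<in> G" for g
  proof -
    have "nat (- fls_subdegree (h g)) \<le> N"
      unfolding N_def using G that by (intro member_le_sum) auto
    then show ?thesis by linarith
  qed
  define p where "p g = fls_regpart (fls_X ^ N * h g)" for g
  have p: "fls_X ^ N * h g = fps_to_fls (p g)" if "g \<in> G" for g
    unfolding p_def using fls_X_pow_regpart[OF N[OF that]] .
  define c where "c = fls_X ^ N * rep v b"
  have ck: "\<exists>F. c = fps_to_fls (fps_X ^ k * F)" for k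
  proof -
    obtain y where y: "y \<in> L" "v = scale (fls_X ^ k) y" using assms[of k] by (auto simp: Z_def)
    obtain r where r: "y = lc r" using y by (auto simp: L_lc)
    have "rep v b = fls_X ^ k * (\<Sum>g\<in>G. fps_to_fls (r g) * h g)"
      unfolding rep_def y r lc_def h_def
      by (simp add: vs.representation_scale[OF B(1) sp] vs.representation_sum[OF B(1) sp] sum_distrib_left)
    then have "c = fls_X ^ k * (\<Sum>g\<in>G. fps_to_fls (r g) * (fls_X ^ N * h g))"
      unfolding c_def by (simp add: sum_distrib_left mult_ac)
    also have "\<dots> = fls_X ^ k * (\<Sum>g\<in>G. fps_to_fls (r g) * fps_to_fls (p g))"
      using p by simp
    also have "\<dots> = fps_to_fls (fps_X ^ k * (\<Sum>g\<in>G. r g * p g))"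
      by (simp add: fls_times_fps_to_fls fps_to_fls_power fps_to_fls_sum)
    finally show ?thesis by blast
  qed
  have "c = 0"
  proof (rule fls_zero_eqI)
    fix n :: int
    show "c $$ n = 0"
    proof (cases "n < 0")
      case True
      obtain F where "c = fps_to_fls (fps_X ^ 0 * F)" using ck by blast
      then show ?thesis using True by simp
    next
      case False
      obtain F where "c = fps_to_fls (fps_X ^ (Suc (nat n)) * F)" using ck by blast
      moreover have "(fps_X ^ (Suc (nat n)) * F) $ nat n = 0"
        by (simp only: fps_X_power_mult_nth) simp
      ultimately show ?thesis using False by simp
    qed
  qed
  then show False using b unfolding c_def by simp
qed

lemma complete:
  assumes u: "\<And>k. u k \<in> Z k"
  shows "\<exists>x\<in>L. \<forall>m. x - (\<Sum>k<m. u k) \<in> Z m"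
proof -
  have "\<forall>k. \<exists>r. u k = scale (fls_X ^ k) (lc r)"
  proof
    fix k
    have "u k \<in> scale (fls_X ^ k) ` L" using u[of k] unfolding Z_def .
    then show "\<exists>r. u k = scale (fls_X ^ k) (lc r)" unfolding L_lc by blast
  qed
  then obtain r where r: "\<And>k. u k = scale (fls_X ^ k) (lc (r k))" by metis
  define T where "T m g = Abs_fps (\<lambda>n. \<Sum>i\<le>n. r (i + m) g $ (n - i))" for m g
  have T: "T m g - r m g = fps_X * T (Suc m) g" for m g
  proof (rule fps_ext)
    fix n
    show "(T m g - r m g) $ n = (fps_X * T (Suc m) g) $ n"
    proof (cases n)
      case 0 then show ?thesis by (simp add: T_def)
    next
      case (Suc n')
      have "(T m g) $ n = r m g $ n + (\<Sum>i\<le>n'. r (Suc i + m) g $ (n' - i))"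
        unfolding T_def Suc fps_nth_Abs_fps sum.atMost_Suc_shift by simp
      moreover have "(fps_X * T (Suc m) g) $ n = (\<Sum>i\<le>n'. r (Suc i + m) g $ (n' - i))"
        using fps_X_power_mult_nth[of 1 "T (Suc m) g" n] unfolding Suc T_def by simp
      ultimately show ?thesis by simp
    qed
  qed
  define x where "x = lc (T 0)"
  have main: "x - (\<Sum>k<m. u k) = scale (fls_X ^ m) (lc (T m))" for m
  proof (induction m)
    case 0 then show ?case by (simp add: x_def)
  next
    case (Suc m)
    have "x - (\<Sum>k<Suc m. u k) = scale (fls_X ^ m) (lc (T m)) - scale (fls_X ^ m) (lc (r m))"
      using Suc by (simp add: r)
    also have "\<dots> = scale (fls_X ^ m) (lc (\<lambda>g. T m g - r m g))"
      by (simp add: lc_diff vs.scale_right_diff_distrib)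
    also have "\<dots> = scale (fls_X ^ m) (scale (fps_to_fls fps_X) (lc (T (Suc m))))"
      by (simp only: T lc_mult)
    also have "\<dots> = scale (fls_X ^ Suc m) (lc (T (Suc m)))"
      by (simp add: vs.scale_scale mult.commute)
    finally show ?case .
  qed
  show ?thesis
    using main lcI unfolding Z_def x_def by blast
qed

definition opp :: "complex poly \<Rightarrow> 'v \<Rightarrow> 'v" where
  "opp p x = (\<Sum>i\<le>degree p. cs (coeff p i) ((xi ^^ i) x))"

lemma opp_upto: "degree p \<le> N \<Longrightarrow> opp p x = (\<Sum>i\<le>N. cs (coeff p i) ((xi ^^ i) x))"
  unfolding opp_def by (rule sum.mono_neutral_left) (auto simp: coeff_eq_0)

lemma opp_0[simp]: "opp 0 x = 0"
  by (simp add: opp_def)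

lemma xi_funpow_Suc: "(xi ^^ Suc i) x = xi ((xi ^^ i) x)"
  by simp

lemma opp_pCons: "opp (pCons a p) x = cs a x + xi (opp p x)"
proof -
  have "opp (pCons a p) x = (\<Sum>i\<le>Suc (degree p). cs (coeff (pCons a p) i) ((xi ^^ i) x))"
    by (rule opp_upto[OF degree_pCons_le])
  also have "\<dots> = cs a x + (\<Sum>i\<le>degree p. cs (coeff p i) ((xi ^^ Suc i) x))"
    by (simp only: sum.atMost_Suc_shift coeff_pCons_0 coeff_pCons_Suc) simp
  also have "(\<Sum>i\<le>degree p. cs (coeff p i) ((xi ^^ Suc i) x)) = xi (opp p x)"
    unfolding opp_def xi_sum xi_cs xi_funpow_Suc ..
  finally show ?thesis .
qed

lemma opp_add: "opp (p + r) x = opp p x + opp r x"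
proof -
  define N where "N = max (degree p) (degree r)"
  have "opp (p + r) x = (\<Sum>i\<le>N. cs (coeff (p + r) i) ((xi ^^ i) x))"
    by (rule opp_upto) (simp add: N_def degree_add_le)
  also have "\<dots> = (\<Sum>i\<le>N. cs (coeff p i) ((xi ^^ i) x)) + (\<Sum>i\<le>N. cs (coeff r i) ((xi ^^ i) x))"
    by (simp add: fls_const_add' vs.scale_left_distrib sum.distrib)
  also have "\<dots> = opp p x + opp r x"
    using opp_upto[of p N x] opp_upto[of r N x] by (simp add: N_def)
  finally show ?thesis .
qed

lemma opp_smult: "opp (smult c p) x = cs c (opp p x)"
proof -
  have "opp (smult c p) x = (\<Sum>i\<le>degree p. cs (coeff (smult c p) i) ((xi ^^ i) x))"
    by (rule opp_upto[OF degree_smult_le])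
  also have "\<dots> = cs c (opp p x)"
    by (simp add: opp_def vs.scale_sum_right vs.scale_scale)
  finally show ?thesis .
qed

lemma opp_closed:
  assumes "0 \<in> S" "\<And>x y. x \<in> S \<Longrightarrow> y \<in> S \<Longrightarrow> x + y \<in> S"
    "\<And>c x. x \<in> S \<Longrightarrow> cs c x \<in> S" "\<And>x. x \<in> S \<Longrightarrow> xi x \<in> S" "x \<in> S"
  shows "opp p x \<in> S"
  by (induction p rule: pCons_induct) (auto simp: opp_pCons assms)

lemma opp_L: "x \<in> L \<Longrightarrow> opp p x \<in> L"
  by (rule opp_closed) (auto simp: L_0 L_add L_cs L_xi)

lemma opp_Z: "x \<in> Z k \<Longrightarrow> opp p x \<in> Z k"
  by (rule opp_closed) (auto simp: Z_0 Z_add Z_cs Z_xi)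

lemma opp_addx: "opp p (x + y) = opp p x + opp p y"
  by (induction p rule: pCons_induct) (simp_all add: opp_pCons xi_add vs.scale_right_distrib algebra_simps)

lemma opp_csx: "opp p (cs c x) = cs c (opp p x)"
  by (induction p rule: pCons_induct) 
     (simp_all add: opp_pCons xi_add xi_cs vs.scale_right_distrib vs.scale_scale mult.commute)

lemma opp_0x[simp]: "opp p 0 = 0"
  using opp_addx[of p 0 0] by simp

lemma opp_minusx: "opp p (- x) = - opp p x"
  using opp_addx[of p x "-x"] by (simp add: eq_neg_iff_add_eq_0 add.commute)

lemma opp_diffx: "opp p (x - y) = opp p x - opp p y"
  using opp_addx[of p x "-y"] opp_minusx[of p y] by simp

lemma opp_xi: "xi (opp p x) = opp p (xi x)"
  by (induction p rule: pCons_induct) (simp_all add: opp_pCons xi_add xi_cs)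

lemma opp_mult: "opp (p * r) x = opp p (opp r x)"
proof (induction p rule: pCons_induct)
  case 0 then show ?case by simp
next
  case (pCons a p)
  have "opp (pCons 0 (p * r)) x = xi (opp (p * r) x)"
    by (simp add: opp_pCons)
  then show ?case
    by (simp add: opp_add opp_smult opp_pCons pCons.IH)
qed

lemma opp_lin: "opp [:-a, 1:] x = xi x - cs a x"
  by (simp add: opp_pCons vs.scale_minus_left)

lemma opp_const: "opp [:a:] x = cs a x"
  by (simp add: opp_pCons)

lemma cs_sum_left: "cs (sum f A) v = (\<Sum>a\<in>A. cs (f a) v)"
  by (induction A rule: infinite_finite_induct) (auto simp: fls_const_add' vs.scale_left_distrib)

lemma opp_sumx: "opp p (sum f A) = (\<Sum>a\<in>A. opp p (f a))"
  by (induction A rule: infinite_finite_induct) (auto simp: opp_addx)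

lemma G_L: "g \<in> G \<Longrightarrow> g \<in> L"
proof -
  assume g: "g \<in> G"
  have e: "scale (fps_to_fls (if h = g then 1 else 0)) h = (if h = g then g else 0)" for h
    by simp
  have "lc (\<lambda>h. if h = g then 1 else 0) = g"
    unfolding lc_def e using g G by simp
  then show ?thesis using lcI by metis
qed

lemma annih_one: "g \<in> L \<Longrightarrow> \<exists>p. p \<noteq> 0 \<and> opp p g \<in> Z 1"
proof -
  assume gL: "g \<in> L"
  define n where "n = card G"
  have "\<forall>i. \<exists>c. (xi ^^ i) g - (\<Sum>h\<in>G. cs (c h) h) \<in> Z 1"
  proof
    fix i
    have "(xi ^^ i) g \<in> L" by (induction i) (auto simp: gL L_xi)
    then show "\<exists>c. (xi ^^ i) g - (\<Sum>h\<in>G. cs (c h) h) \<in> Z 1" by (rule L_decomp)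
  qed
  then obtain a where a: "\<And>i. (xi ^^ i) g - (\<Sum>h\<in>G. cs (a i h) h) \<in> Z 1" by metis
  obtain c where c: "\<exists>i\<in>{..n}. c i \<noteq> 0" "\<forall>h\<in>G. (\<Sum>i\<in>{..n}. c i * a i h) = 0"
    using kernel_lemma[OF G, of "{..n}" a] by (auto simp: n_def)
  define p where "p = (\<Sum>i\<le>n. monom (c i) i)"
  have cp: "coeff p i = (if i \<le> n then c i else 0)" for i
    unfolding p_def coeff_sum by (auto simp: if_distrib cong: if_cong)
  have dp: "degree p \<le> n" by (rule degree_le) (simp add: cp)
  have p0: "p \<noteq> 0" using c(1) cp by (metis atMost_iff coeff_0)
  define w where "w i = (xi ^^ i) g - (\<Sum>h\<in>G. cs (a i h) h)" for i
  have "opp p g = (\<Sum>i\<le>n. cs (c i) ((xi ^^ i) g))"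
    by (simp add: opp_upto[OF dp] cp)
  also have "\<dots> = (\<Sum>i\<le>n. cs (c i) (w i)) + (\<Sum>i\<le>n. cs (c i) (\<Sum>h\<in>G. cs (a i h) h))"
    by (simp add: w_def vs.scale_right_diff_distrib sum_subtractf)
  also have "(\<Sum>i\<le>n. cs (c i) (\<Sum>h\<in>G. cs (a i h) h)) = (\<Sum>h\<in>G. (\<Sum>i\<le>n. cs (c i * a i h) h))"
    by (simp add: vs.scale_sum_right vs.scale_scale sum.swap[of _ G])
  also have "\<dots> = (\<Sum>h\<in>G. cs (\<Sum>i\<le>n. c i * a i h) h)"
    by (simp add: cs_sum_left)
  also have "\<dots> = 0" using c(2) by simp
  finally have "opp p g = (\<Sum>i\<le>n. cs (c i) (w i))" by simp
  also have "\<dots> \<in> Z 1" using a by (intro Z_sum Z_cs) (simp add: w_def)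
  finally show ?thesis using p0 by blast
qed

lemma annih: "\<exists>p. p \<noteq> 0 \<and> (\<forall>x\<in>L. opp p x \<in> Z 1)"
proof -
  have "\<forall>g\<in>G. \<exists>p. p \<noteq> 0 \<and> opp p g \<in> Z 1" using annih_one G_L by blast
  then obtain pg where pg: "\<And>g. g \<in> G \<Longrightarrow> pg g \<noteq> 0 \<and> opp (pg g) g \<in> Z 1" by metis
  define P where "P = (\<Prod>g\<in>G. pg g)"
  have P0: "P \<noteq> 0" unfolding P_def using pg G by (auto simp: prod_zero_iff)
  have PG: "opp P g \<in> Z 1" if g: "g \<in> G" for g
  proof -
    have "P = (\<Prod>h\<in>G - {g}. pg h) * pg g"
      unfolding P_def using g G by (simp add: prod.remove mult.commute)
    then have "opp P g = opp (\<Prod>h\<in>G - {g}. pg h) (opp (pg g) g)" by (simp add: opp_mult)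
    then show ?thesis using pg[OF g] opp_Z by simp
  qed
  have "opp P x \<in> Z 1" if x: "x \<in> L" for x
  proof -
    obtain c where c: "x - (\<Sum>g\<in>G. cs (c g) g) \<in> Z 1" using L_decomp[OF x] by blast
    have "opp P x = opp P (x - (\<Sum>g\<in>G. cs (c g) g)) + (\<Sum>g\<in>G. cs (c g) (opp P g))"
      by (simp add: opp_diffx opp_sumx opp_csx)
    also have "\<dots> \<in> Z 1" using opp_Z[OF c] PG by (intro Z_add Z_sum Z_cs) auto
    finally show ?thesis .
  qed
  then show ?thesis using P0 by blast
qed

lemma opp_lin_pow_inj:
  assumes inj: "\<And>w. w \<in> L \<Longrightarrow> xi w - cs \<beta> w \<in> Z 1 \<Longrightarrow> w \<in> Z 1"
  shows "u \<in> L \<Longrightarrow> opp ([:-\<beta>, 1:] ^ m) u \<in> Z 1 \<Longrightarrow> u \<in> Z 1"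
proof (induction m arbitrary: u)
  case 0 then show ?case using opp_const[of 1 u] by (simp add: one_pCons)
next
  case (Suc m)
  have "opp ([:-\<beta>, 1:] ^ Suc m) u = opp [:-\<beta>, 1:] (opp ([:-\<beta>, 1:] ^ m) u)"
    by (simp only: power_Suc opp_mult)
  then have "opp ([:-\<beta>, 1:] ^ m) u \<in> Z 1"
    using Suc.prems inj opp_L by (simp add: opp_lin)
  then show ?case using Suc by blast
qed

lemma inj_surj:
  assumes inj: "\<And>w. w \<in> L \<Longrightarrow> xi w - cs \<beta> w \<in> Z 1 \<Longrightarrow> w \<in> Z 1"
    and y: "y \<in> L"
  shows "\<exists>v\<in>L. y - (xi v - cs \<beta> v) \<in> Z 1"
proof -
  obtain p where p: "p \<noteq> 0" "\<And>x. x \<in> L \<Longrightarrow> opp p x \<in> Z 1" using annih by blast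
  obtain h where h: "p = [:-\<beta>, 1:] ^ order \<beta> p * h" "\<not> [:-\<beta>, 1:] dvd h"
    using order_decomp[OF p(1)] by blast
  have hb: "poly h \<beta> \<noteq> 0" using h(2) by (simp add: poly_eq_0_iff_dvd)
  have hZ: "opp h x \<in> Z 1" if "x \<in> L" for x
  proof -
    have "opp ([:-\<beta>, 1:] ^ order \<beta> p) (opp h x) \<in> Z 1"
      using p(2)[OF that] h(1) by (metis opp_mult)
    then show ?thesis using opp_lin_pow_inj[OF inj] opp_L that by blast
  qed
  define sd where "sd = synthetic_div h \<beta>"
  define hv where "hv = poly h \<beta>"
  have hsplit: "opp h y = opp [:-\<beta>, 1:] (opp sd y) + cs hv y"
  proof -
    have "opp h y = opp ([:-\<beta>, 1:] * sd + [:hv:]) y"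
      unfolding sd_def hv_def synthetic_div_correct' ..
    then show ?thesis by (simp only: opp_add opp_mult opp_const)
  qed
  define v where "v = cs (- 1 / hv) (opp sd y)"
  have vL: "v \<in> L" unfolding v_def using y by (intro L_cs opp_L)
  have "xi v - cs \<beta> v = cs (- 1 / hv) (opp [:-\<beta>, 1:] (opp sd y))"
    unfolding v_def by (simp only: opp_lin[symmetric] opp_csx)
  also have "\<dots> = cs (- 1 / hv) (opp h y - cs hv y)"
    by (simp add: hsplit)
  also have "\<dots> = y - cs (1 / hv) (opp h y)"
    using hb by (simp add: hv_def vs.scale_right_diff_distrib vs.scale_scale vs.scale_minus_left)
  finally have "y - (xi v - cs \<beta> v) = cs (1 / hv) (opp h y)" by simp
  also have "\<dots> \<in> Z 1" using hZ[OF y] by (rule Z_cs)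
  finally show ?thesis using vL by blast
qed

lemma T_graded_eq:
  "opp [:-\<alpha>, 1:] (scale (fls_X ^ k) w) = scale (fls_X ^ k) (cs (q ^ k) (xi w - cs (\<alpha> / q ^ k) w))"
proof -
  have "opp [:-\<alpha>, 1:] (scale (fls_X ^ k) w) = cs (q ^ k) (scale (fls_X ^ k) (xi w)) - cs \<alpha> (scale (fls_X ^ k) w)"
    by (simp add: opp_lin xi_Xpow)
  also have "\<dots> = scale (fls_X ^ k) (cs (q ^ k) (xi w - cs (\<alpha> / q ^ k) w))"
    using q_nz by (simp add: vs.scale_right_diff_distrib vs.scale_scale mult.commute)
  finally show ?thesis .
qed

lemma graded_inj:
  assumes inj: "\<And>w. w \<in> L \<Longrightarrow> xi w - cs (\<alpha> / q ^ k) w \<in> Z 1 \<Longrightarrow> w \<in> Z 1"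
    and w: "w \<in> L" and T: "opp [:-\<alpha>, 1:] (scale (fls_X ^ k) w) \<in> Z (k + 1)"
  shows "w \<in> Z 1"
proof -
  have "cs (q ^ k) (xi w - cs (\<alpha> / q ^ k) w) \<in> Z 1"
    using T unfolding T_graded_eq Z_scale_iff .
  then have "cs (1 / q ^ k) (cs (q ^ k) (xi w - cs (\<alpha> / q ^ k) w)) \<in> Z 1" by (rule Z_cs)
  then have "xi w - cs (\<alpha> / q ^ k) w \<in> Z 1" using q_nz by (simp add: vs.scale_scale)
  then show ?thesis using inj w by blast
qed

lemma graded_surj:
  assumes inj: "\<And>w. w \<in> L \<Longrightarrow> xi w - cs (\<alpha> / q ^ k) w \<in> Z 1 \<Longrightarrow> w \<in> Z 1"
    and w: "w \<in> L"
  shows "\<exists>v\<in>L. scale (fls_X ^ k) w - opp [:-\<alpha>, 1:] (scale (fls_X ^ k) v) \<in> Z (k + 1)"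
proof -
  obtain v where v: "v \<in> L" "cs (1 / q ^ k) w - (xi v - cs (\<alpha> / q ^ k) v) \<in> Z 1"
    using inj_surj[OF inj L_cs[OF w]] by blast
  have "scale (fls_X ^ k) w - opp [:-\<alpha>, 1:] (scale (fls_X ^ k) v) 
     = scale (fls_X ^ k) (cs (q ^ k) (cs (1 / q ^ k) w - (xi v - cs (\<alpha> / q ^ k) v)))"
    unfolding T_graded_eq using q_nz
    by (simp add: vs.scale_right_diff_distrib vs.scale_scale)
  also have "\<dots> \<in> Z (k + 1)" unfolding Z_scale_iff using v(2) by (rule Z_cs)
  finally show ?thesis using v(1) by blast
qed

definition good :: "complex \<Rightarrow> bool" where
  "good \<alpha> \<longleftrightarrow> (\<forall>k\<ge>1. \<forall>w\<in>L. xi w - cs (\<alpha> / q ^ k) w \<in> Z 1 \<longrightarrow> w \<in> Z 1)"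

lemma goodD: "good \<alpha> \<Longrightarrow> 1 \<le> k \<Longrightarrow> w \<in> L \<Longrightarrow> xi w - cs (\<alpha> / q ^ k) w \<in> Z 1 \<Longrightarrow> w \<in> Z 1"
  unfolding good_def by blast

lemma T_inj0:
  assumes g: "good \<alpha>" and y: "y \<in> Z 1" and T: "opp [:-\<alpha>, 1:] y = 0"
  shows "y = 0"
proof (rule sep)
  have "y \<in> Z (Suc k)" for k
  proof (induction k)
    case 0 then show ?case using y by simp
  next
    case (Suc k)
    obtain w where w: "w \<in> L" "y = scale (fls_X ^ Suc k) w" using Suc by (auto simp: Z_def)
    have "opp [:-\<alpha>, 1:] (scale (fls_X ^ Suc k) w) \<in> Z (Suc k + 1)"
      using T w(2) Z_0 by metis
    moreover have "\<And>w. w \<in> L \<Longrightarrow> xi w - cs (\<alpha> / q ^ Suc k) w \<in> Z 1 \<Longrightarrow> w \<in> Z 1"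
    proof -
      fix w assume "w \<in> L" "xi w - cs (\<alpha> / q ^ Suc k) w \<in> Z 1"
      moreover have "Suc k \<ge> 1" by simp
      ultimately show "w \<in> Z 1" using g unfolding good_def by blast
    qed
    ultimately have "w \<in> Z 1" using graded_inj[OF _ w(1)] by blast
    then show ?case using w(2) Z_scale_iff[of "Suc k" w 1] by simp
  qed
  then show "y \<in> Z k" for k using Z_mono[of k "Suc k"] by simp
qed

lemma T_inj:
  assumes g: "good \<alpha>" and y: "y \<in> Z 1" "y' \<in> Z 1" and T: "opp [:-\<alpha>, 1:] y = opp [:-\<alpha>, 1:] y'"
  shows "y = y'"
  using T_inj0[OF g Z_diff[OF y]] T by (simp add: opp_diffx)

lemma T_surj:
  assumes g: "good \<alpha>" and y: "y \<in> Z 1"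
  shows "\<exists>x\<in>Z 1. opp [:-\<alpha>, 1:] x = y"
proof -
  let ?T = "opp [:-\<alpha>, 1:]"
  have ex: "\<exists>u. u \<in> Z k \<and> e - ?T u \<in> Z (Suc k)" if k: "k \<ge> 1" "e \<in> Z k" for k e
  proof -
    obtain w where w: "w \<in> L" "e = scale (fls_X ^ k) w" using k by (auto simp: Z_def)
    obtain v where v: "v \<in> L" "scale (fls_X ^ k) w - ?T (scale (fls_X ^ k) v) \<in> Z (k + 1)"
      using graded_surj[OF goodD[OF g k(1)] w(1)] by blast
    have "scale (fls_X ^ k) v \<in> Z k" using v(1) unfolding Z_def by blast
    then show ?thesis using w v(2) by (intro exI[of _ "scale (fls_X ^ k) v"]) simp
  qed
  define stp where "stp k e = (SOME u. u \<in> Z k \<and> e - ?T u \<in> Z (Suc k))" for k e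
  have stp: "stp k e \<in> Z k \<and> e - ?T (stp k e) \<in> Z (Suc k)" if "k \<ge> 1" "e \<in> Z k" for k e
    unfolding stp_def using someI_ex[OF ex[OF that]] .
  define e where "e = rec_nat y (\<lambda>n en. en - ?T (stp (Suc n) en))"
  have e0: "e 0 = y" and eS: "e (Suc n) = e n - ?T (stp (Suc n) (e n))" for n
    by (simp_all add: e_def)
  define u where "u n = stp (Suc n) (e n)" for n
  have eZ: "e n \<in> Z (Suc n)" for n
  proof (induction n)
    case 0 then show ?case using y by (simp add: e0)
  next
    case (Suc n)
    have "e n - ?T (stp (Suc n) (e n)) \<in> Z (Suc (Suc n))" using stp[OF _ Suc] by simp
    then show ?case by (simp only: eS)
  qed
  have uZ: "u n \<in> Z (Suc n)" for n using stp[OF _ eZ[of n]] by (simp add: u_def)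
  obtain x where x: "x \<in> L" "\<And>m. x - (\<Sum>k<m. u k) \<in> Z m"
    using complete[of u] uZ Z_Suc by blast
  have tele: "(\<Sum>k<m. ?T (u k)) = y - e m" for m
    by (induction m) (simp_all add: e0 eS u_def)
  have xZ: "x \<in> Z 1"
  proof -
    have "x - u 0 \<in> Z 1" using x(2)[of 1] by simp
    then have "(x - u 0) + u 0 \<in> Z 1" using uZ[of 0] by (intro Z_add) simp_all
    then show ?thesis by simp
  qed
  have "?T x - y = 0"
  proof (rule sep)
    fix m
    have "?T x - y = ?T (x - (\<Sum>k<m. u k)) - e m"
      by (simp add: opp_diffx opp_sumx tele)
    also have "\<dots> \<in> Z m"
      using opp_Z[OF x(2)[of m]] Z_Suc[OF eZ[of m]] by (rule Z_diff)
    finally show "?T x - y \<in> Z m" .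
  qed
  then show ?thesis using xZ by auto
qed

lemma bij_poly:
  "f \<noteq> 0 \<Longrightarrow> (\<forall>a. poly f a = 0 \<longrightarrow> good a) \<Longrightarrow>
   (\<forall>y\<in>Z 1. opp f y = 0 \<longrightarrow> y = 0) \<and> (\<forall>y\<in>Z 1. \<exists>x\<in>Z 1. opp f x = y)"
proof (induction "degree f" arbitrary: f rule: less_induct)
  case less
  show ?case
  proof (cases "degree f = 0")
    case True
    then obtain c where c: "f = [:c:]" by (metis degree_eq_zeroE)
    then have c0: "c \<noteq> 0" using less.prems by simp
    have "\<forall>y\<in>Z 1. opp f y = 0 \<longrightarrow> y = 0" using c0 by (simp add: c opp_const)
    moreover have "\<exists>x\<in>Z 1. opp f x = y" if "y \<in> Z 1" for y
    proof
      show "cs (1 / c) y \<in> Z 1" using that by (rule Z_cs)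
      show "opp f (cs (1 / c) y) = y" using c0 by (simp add: c opp_const vs.scale_scale)
    qed
    ultimately show ?thesis by blast
  next
    case False
    then obtain a where a: "poly f a = 0"
      using fundamental_theorem_of_algebra[of f] constant_degree[of f] False by blast
    then obtain f' where f': "f = [:-a, 1:] * f'" using poly_eq_0_iff_dvd by (metis dvdE)
    have f'0: "f' \<noteq> 0" using less.prems f' by auto
    have "degree ([:-a, 1:] * f') = degree [:-a, 1:] + degree f'"
      by (rule degree_mult_eq) (use f'0 in auto)
    then have deg: "degree f' < degree f" using f' by simp
    have roots: "\<forall>b. poly f' b = 0 \<longrightarrow> good b" using less.prems f' by auto
    have IH: "(\<forall>y\<in>Z 1. opp f' y = 0 \<longrightarrow> y = 0) \<and> (\<forall>y\<in>Z 1. \<exists>x\<in>Z 1. opp f' x = y)"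
      using less.hyps[OF deg f'0 roots] .
    have ga: "good a" using less.prems a by blast
    have split: "opp f y = opp [:-a, 1:] (opp f' y)" for y unfolding f' by (rule opp_mult)
    have "\<forall>y\<in>Z 1. opp f y = 0 \<longrightarrow> y = 0"
    proof (intro ballI impI)
      fix y assume y: "y \<in> Z 1" "opp f y = 0"
      have "opp f' y = 0" using T_inj0[OF ga opp_Z[OF y(1)]] y(2) split by simp
      then show "y = 0" using IH y(1) by blast
    qed
    moreover have "\<forall>y\<in>Z 1. \<exists>x\<in>Z 1. opp f x = y"
    proof
      fix y assume y: "y \<in> Z 1"
      obtain z where z: "z \<in> Z 1" "opp [:-a, 1:] z = y" using T_surj[OF ga y] by blast
      obtain x where x: "x \<in> Z 1" "opp f' x = z" using IH z(1) by blast
      show "\<exists>x\<in>Z 1. opp f x = y" using x z split by blast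
    qed
    ultimately show ?thesis by blast
  qed
qed

lemma exists_f:
  assumes P_sub: "Z 1 \<subseteq> P" "P \<subseteq> L"
    and P_add: "\<forall>x\<in>P. \<forall>y\<in>P. x + y \<in> P"
    and P_scale: "\<forall>c. \<forall>x\<in>P. cs c x \<in> P"
    and P_inv: "xi ` P \<subseteq> P"
  shows "\<exists>f. f \<noteq> 0 \<and> (\<forall>x\<in>P. opp f x \<in> Z 1) \<and>
            (\<forall>a. poly f a = 0 \<longrightarrow> (\<exists>x\<in>P. x \<notin> Z 1 \<and> xi x - cs a x \<in> Z 1))"
proof -
  obtain p where p: "p \<noteq> 0" "\<forall>x\<in>L. opp p x \<in> Z 1" using annih by blast
  have oP: "opp g x \<in> P" if "x \<in> P" for g x
    by (rule opp_closed) (use assms Z_0 that in auto)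
  have "\<forall>f. degree f = n \<longrightarrow> f \<noteq> 0 \<longrightarrow> (\<forall>x\<in>P. opp f x \<in> Z 1) \<longrightarrow>
          (\<exists>f. f \<noteq> 0 \<and> (\<forall>x\<in>P. opp f x \<in> Z 1) \<and>
            (\<forall>a. poly f a = 0 \<longrightarrow> (\<exists>x\<in>P. x \<notin> Z 1 \<and> xi x - cs a x \<in> Z 1)))" for n
  proof (induction n rule: less_induct)
    case (less n)
    show ?case
    proof (intro allI impI)
      fix f assume f: "degree f = n" "f \<noteq> 0" "\<forall>x\<in>P. opp f x \<in> Z 1"
      show "\<exists>f. f \<noteq> 0 \<and> (\<forall>x\<in>P. opp f x \<in> Z 1) \<and>
            (\<forall>a. poly f a = 0 \<longrightarrow> (\<exists>x\<in>P. x \<notin> Z 1 \<and> xi x - cs a x \<in> Z 1))"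
      proof (cases "\<forall>a. poly f a = 0 \<longrightarrow> (\<exists>x\<in>P. x \<notin> Z 1 \<and> xi x - cs a x \<in> Z 1)")
        case True then show ?thesis using f by blast
      next
        case False
        then obtain a where a: "poly f a = 0" "\<forall>x\<in>P. xi x - cs a x \<in> Z 1 \<longrightarrow> x \<in> Z 1" by blast
        then obtain f' where f': "f = [:-a, 1:] * f'" using poly_eq_0_iff_dvd by (metis dvdE)
        have f'0: "f' \<noteq> 0" using f f' by auto
        have "degree ([:-a, 1:] * f') = degree [:-a, 1:] + degree f'"
          by (rule degree_mult_eq) (use f'0 in auto)
        then have deg: "degree f' < n" using f(1) f' by simp
        have "\<forall>x\<in>P. opp f' x \<in> Z 1"
        proof
          fix x assume x: "x \<in> P"
          have "opp [:-a, 1:] (opp f' x) \<in> Z 1" using f(3) x unfolding f' opp_mult by blast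
          then show "opp f' x \<in> Z 1" using a(2) oP[OF x] by (simp add: opp_lin)
        qed
        then show ?thesis using less.IH[OF deg] f'0 by blast
      qed
    qed
  qed
  then show ?thesis using p assms by blast
qed

lemma main:
  assumes P_sub: "Z 1 \<subseteq> P" "P \<subseteq> L"
    and P_add: "\<forall>x\<in>P. \<forall>y\<in>P. x + y \<in> P"
    and P_scale: "\<forall>c. \<forall>x\<in>P. cs c x \<in> P"
    and P_inv: "xi ` P \<subseteq> P"
    and f: "f \<noteq> 0" "\<forall>x\<in>P. opp f x \<in> Z 1" "\<forall>a. poly f a = 0 \<longrightarrow> good a"
  shows "\<exists>s :: 'v \<Rightarrow> 'v.
           (\<forall>x\<in>P. s x \<in> L) \<and>
           (\<forall>x\<in>P. x - s x \<in> Z 1) \<and>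
           (\<forall>x\<in>P. \<forall>y\<in>P. x - y \<in> Z 1 \<longrightarrow> s x = s y) \<and>
           (\<forall>x\<in>P. \<forall>y\<in>P. s (x + y) = s x + s y) \<and>
           (\<forall>c. \<forall>x\<in>P. s (cs c x) = cs c (s x)) \<and>
           (\<forall>x\<in>P. s (xi x) = xi (s x))"
proof -
  let ?F = "opp f"
  have bp: "(\<forall>y\<in>Z 1. ?F y = 0 \<longrightarrow> y = 0) \<and> (\<forall>y\<in>Z 1. \<exists>x\<in>Z 1. ?F x = y)"
    using bij_poly[OF f(1) f(3)] .
  have inj: "y = y'" if "y \<in> Z 1" "y' \<in> Z 1" "?F y = ?F y'" for y y'
  proof -
    have "?F (y - y') = 0" using that by (simp add: opp_diffx)
    then have "y - y' = 0" using bp Z_diff[OF that(1,2)] by blast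
    then show ?thesis by simp
  qed
  define Y where "Y x = (THE y. y \<in> Z 1 \<and> ?F y = ?F x)" for x
  have Y: "Y x \<in> Z 1 \<and> ?F (Y x) = ?F x" if x: "x \<in> P" for x
  proof -
    obtain y where y: "y \<in> Z 1" "?F y = ?F x" using bp f(2) x by blast
    have "Y x = y" unfolding Y_def
      by (rule the_equality) (use y inj in auto)
    then show ?thesis using y by simp
  qed
  have Yu: "Y x = y" if "x \<in> P" "y \<in> Z 1" "?F y = ?F x" for x y
    using Y[OF that(1)] inj that(2,3) by metis
  define s where "s x = x - Y x" for x
  have PL: "x \<in> P \<Longrightarrow> x \<in> L" for x using P_sub by auto
  have ZL: "x \<in> Z 1 \<Longrightarrow> x \<in> L" for x using Z_L by auto
  have "\<forall>x\<in>P. s x \<in> L" unfolding s_def using Y PL ZL L_diff by blast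
  moreover have "\<forall>x\<in>P. x - s x \<in> Z 1" unfolding s_def using Y by simp
  moreover have "\<forall>x\<in>P. \<forall>y\<in>P. x - y \<in> Z 1 \<longrightarrow> s x = s y"
  proof (intro ballI impI)
    fix x y assume xy: "x \<in> P" "y \<in> P" "x - y \<in> Z 1"
    have "Y x = Y y + (x - y)"
    proof (rule Yu[OF xy(1)])
      show "Y y + (x - y) \<in> Z 1" using Y[OF xy(2)] xy(3) by (intro Z_add) auto
      show "?F (Y y + (x - y)) = ?F x" using Y[OF xy(2)] by (simp add: opp_addx opp_diffx)
    qed
    then show "s x = s y" by (simp add: s_def)
  qed
  moreover have "\<forall>x\<in>P. \<forall>y\<in>P. s (x + y) = s x + s y"
  proof (intro ballI)
    fix x y assume xy: "x \<in> P" "y \<in> P"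
    have "Y (x + y) = Y x + Y y"
      by (rule Yu) (use xy P_add Y[OF xy(1)] Y[OF xy(2)] in \<open>auto intro: Z_add simp: opp_addx\<close>)
    then show "s (x + y) = s x + s y" by (simp add: s_def)
  qed
  moreover have "\<forall>c. \<forall>x\<in>P. s (cs c x) = cs c (s x)"
  proof (intro allI ballI)
    fix c x assume x: "x \<in> P"
    have "Y (cs c x) = cs c (Y x)"
      by (rule Yu) (use x P_scale Y[OF x] in \<open>auto intro: Z_cs simp: opp_csx\<close>)
    then show "s (cs c x) = cs c (s x)" by (simp add: s_def vs.scale_right_diff_distrib)
  qed
  moreover have "\<forall>x\<in>P. s (xi x) = xi (s x)"
  proof
    fix x assume x: "x \<in> P"
    have "Y (xi x) = xi (Y x)"
      by (rule Yu) (use x P_inv Y[OF x] in \<open>auto intro: Z_xi simp: opp_xi[symmetric]\<close>)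
    then show "s (xi x) = xi (s x)" by (simp add: s_def xi_diff)
  qed
  ultimately show ?thesis by blast
qed

end

theorem lemma6:
  fixes q :: complex
    and scale :: "complex fls \<Rightarrow> 'v::ab_group_add \<Rightarrow> 'v"
    and xi :: "'v \<Rightarrow> 'v"
    and L P :: "'v set"
  assumes q_nz: "q \<noteq> 0"
    and q_not_root: "\<forall>n::nat. n > 0 \<longrightarrow> q ^ n \<noteq> 1"
    and V: "qdiff_module q scale xi"
    and L: "R_lattice scale L"
    and L_inv: "xi ` L \<subseteq> L"
    and P_sub: "zmul scale L \<subseteq> P" "P \<subseteq> L"
    and P_add: "\<forall>x\<in>P. \<forall>y\<in>P. x + y \<in> P"
    and P_scale: "\<forall>c. \<forall>x\<in>P. cscale scale c x \<in> P"
    and P_inv: "xi ` P \<subseteq> P"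
    and nonres: "\<forall>\<alpha> (n::int). quot_eigenvalue scale xi L P \<alpha> \<and> n \<noteq> 0 \<longrightarrow>
                   \<not> quot_eigenvalue scale xi L L (q powi n * \<alpha>)"
  shows "\<exists>s :: 'v \<Rightarrow> 'v.
           (\<forall>x\<in>P. s x \<in> L) \<and>
           (\<forall>x\<in>P. x - s x \<in> zmul scale L) \<and>
           (\<forall>x\<in>P. \<forall>y\<in>P. x - y \<in> zmul scale L \<longrightarrow> s x = s y) \<and>
           (\<forall>x\<in>P. \<forall>y\<in>P. s (x + y) = s x + s y) \<and>
           (\<forall>c. \<forall>x\<in>P. s (cscale scale c x) = cscale scale c (s x)) \<and>
           (\<forall>x\<in>P. s (xi x) = xi (s x))"
proof -
  obtain G where G: "finite G" "L = {v. \<exists>r. v = (\<Sum>g\<in>G. scale (fps_to_fls (r g)) g)}"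
    using L unfolding R_lattice_def by blast
  interpret qsetup q scale xi G L
    by unfold_locales (use q_nz V G L_inv in auto)
  note Z1 = Z_1
  obtain f where f: "f \<noteq> 0" "\<forall>x\<in>P. opp f x \<in> Z 1"
    "\<forall>a. poly f a = 0 \<longrightarrow> (\<exists>x\<in>P. x \<notin> Z 1 \<and> xi x - cscale scale a x \<in> Z 1)"
    using exists_f[of P] P_sub P_add P_scale P_inv unfolding Z1 by blast
  have good: "good a" if a: "poly f a = 0" for a
    unfolding good_def
  proof (intro allI impI ballI)
    fix k :: nat and w assume k: "1 \<le> k" and w: "w \<in> L" "xi w - cscale scale (a / q ^ k) w \<in> Z 1"
    have qe: "quot_eigenvalue scale xi L P a"
      using f(3) a unfolding quot_eigenvalue_def Z1 by blast
    have "q powi (- int k) * a = a / q ^ k"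
      by (simp add: power_int_minus field_simps)
    then have "\<not> quot_eigenvalue scale xi L L (a / q ^ k)"
      using nonres qe k by (metis of_nat_0_eq_iff neg_equal_0_iff_equal not_one_le_zero)
    then show "w \<in> Z 1" using w unfolding quot_eigenvalue_def Z1 by blast
  qed
  show ?thesis
    using main[of P f] P_sub P_add P_scale P_inv f(1,2) good unfolding Z1 by blast
qed

end
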